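(* Let $X\subseteq U$ be a fixed set of $|X|=m$ keys (balls), let $h:U\to[n]$ be a simple tabulation hash function, and let $y\in[n]$ be any fixed bin. If $p$ denotes the probability that $y\in h(X)$, then $$|p-p_0|\le \frac{m^{2-1/c}}{n^2},\qquad\text{and hence}\qquad \bigl|\mathbb{E}[|h(X)|]-\mu_0\bigr|\le \frac{m^{2-1/c}}{n}.$$ Moreover, if $q\in U\setminus X$ is a distinguished query key and the bin $y$ is allowed to depend on $h(q)$ (e.g. $y=h(q)$), i.e. for every $z\in[n]$, conditioned on $h(q)=z$ the bin $y$ is a fixed function of $z$ and $p$ denotes the conditional probability that $y\in h(X)$, then the weaker bound $|p-p_0|\le \frac{2m^{2-1/c}}{n^2}$ holds.
   Context: Simple tabulation hashing: the key universe is $U=[u]=\{0,\dots,u-1\}$, and each key $x\in U$ is viewed as a vector $(x[0],\dots,x[c-1])$ of $c=O(1)$ characters, each $x[i]\in\Sigma=[u^{1/c}]$. The range is $[n]=[2^r]$, viewed as $r$-bit strings. A simple tabulation hash function is $h(x)=h_0(x[0])\oplus\cdots\oplus h_{c-1}(x[c-1])$, where $h_0,\dots,h_{c-1}:\Sigma\to[2^r]$ are independent fully random functions and $\oplus$ is bitwise XOR. Notation: $p_0=1-(1-1/n)^m$ and $\mu_0=np_0$ (the probability a given bin is non-empty, resp. the expected number of non-empty bins, when $m$ balls are hashed fully randomly into $n$ bins). *)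

theory Defs
  imports "HOL-Probability.Probability"
begin

text \<open>Keys of U = [s^c] are vectors (lists) of c characters from Sigma = [s] = {0..<s}.\<close>
definition tab_keys :: "nat \<Rightarrow> nat \<Rightarrow> nat list set" where
  "tab_keys c s = {x. length x = c \<and> (\<forall>i<c. x ! i < s)}"

text \<open>Tables: c functions h_i : [s] \<rightarrow> [2^r] (extensional outside their domains).\<close>
definition tab_tables :: "nat \<Rightarrow> nat \<Rightarrow> nat \<Rightarrow> (nat \<Rightarrow> nat \<Rightarrow> nat) set" where
  "tab_tables c s r = PiE {0..<c} (\<lambda>_. PiE {0..<s} (\<lambda>_. {0..<(2::nat)^r}))"

text \<open>Uniform distribution over tables = independent fully random h_0,...,h_{c-1}.\<close>
definition tab_pmf :: "nat \<Rightarrow> nat \<Rightarrow> nat \<Rightarrow> (nat \<Rightarrow> nat \<Rightarrow> nat) pmf" where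
  "tab_pmf c s r = pmf_of_set (tab_tables c s r)"

definition tab_hash :: "nat \<Rightarrow> (nat \<Rightarrow> nat \<Rightarrow> nat) \<Rightarrow> nat list \<Rightarrow> nat" where
  "tab_hash c T x = foldr (\<lambda>i acc. Bit_Operations.xor (T i (x ! i)) acc) [0..<c] 0"

definition p0 :: "nat \<Rightarrow> nat \<Rightarrow> real" where
  "p0 n m = 1 - (1 - 1 / real n) ^ m"

end

theory Submission
  imports Defs
begin

definition F :: "nat list \<Rightarrow> (nat \<Rightarrow> nat) \<Rightarrow> nat" where
  "F L f = foldr (\<lambda>i acc. Bit_Operations.xor (f i) acc) L 0"

lemma F_Nil[simp]: "F [] f = 0" by (simp add: F_def)
lemma F_Cons[simp]: "F (i # L) f = Bit_Operations.xor (f i) (F L f)" by (simp add: F_def)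

lemma F_cong: "(\<And>i. i \<in> set L \<Longrightarrow> f i = g i) \<Longrightarrow> F L f = F L g"
  by (induction L) auto

lemma F_split: "j \<in> set L \<Longrightarrow> distinct L \<Longrightarrow> F L f = Bit_Operations.xor (f j) (F L (f(j := 0)))"
proof (induction L)
  case Nil then show ?case by simp
next
  case (Cons i L)
  show ?case
  proof (cases "i = j")
    case True
    with Cons.prems have "j \<notin> set L" by auto
    then have "F L f = F L (f(j:=0))" by (intro F_cong) auto
    with True show ?thesis by (simp add: fun_upd_def)
  next
    case False
    have IH: "F L f = Bit_Operations.xor (f j) (F L (f(j := 0)))"
      using Cons.prems False by (intro Cons.IH) auto
    have "F (i # L) f = Bit_Operations.xor (f i) (F L f)" by simp
    also have "\<dots> = Bit_Operations.xor (f j) (Bit_Operations.xor (f i) (F L (f(j := 0))))"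
      by (simp add: IH xor.left_commute)
    also have "Bit_Operations.xor (f i) (F L (f(j := 0))) = F (i # L) (f(j := 0))"
      using False by simp
    finally show ?thesis .
  qed
qed

lemma xor_less: "(a::nat) < 2^r \<Longrightarrow> b < 2^r \<Longrightarrow> Bit_Operations.xor a b < 2^r"
proof -
  assume a: "a < 2^r" and b: "b < 2^r"
  have "take_bit r (Bit_Operations.xor a b) = Bit_Operations.xor a b" using a b by (simp add: take_bit_nat_eq_self)
  then show ?thesis by (metis take_bit_nat_less_exp)
qed

lemma F_less: "(\<And>i. i \<in> set L \<Longrightarrow> f i < 2^r) \<Longrightarrow> F L f < 2^r"
  by (induction L) (auto intro: xor_less)

lemma tab_hash_F: "tab_hash c T x = F [0..<c] (\<lambda>i. T i (x ! i))"
  by (simp add: tab_hash_def F_def)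

definition upd :: "(nat \<Rightarrow> nat \<Rightarrow> nat) \<Rightarrow> nat \<Rightarrow> nat \<Rightarrow> nat \<Rightarrow> (nat \<Rightarrow> nat \<Rightarrow> nat)" where
  "upd T j a v = T(j := (T j)(a := v))"

lemma hash_upd_other: "x ! j \<noteq> a \<Longrightarrow> tab_hash c (upd T j a v) x = tab_hash c T x"
  unfolding tab_hash_F by (intro F_cong) (auto simp: upd_def)

lemma hash_upd_same:
  assumes "j < c" "x ! j = a"
  shows "tab_hash c (upd T j a v) x = Bit_Operations.xor v (tab_hash c (upd T j a 0) x)"
proof -
  have j: "j \<in> set [0..<c]" "distinct [0..<c]" using assms by auto
  have e: "((\<lambda>i. upd T j a v i (x ! i))(j := 0)) = ((\<lambda>i. upd T j a 0 i (x ! i))(j := 0))"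
    by (auto simp: upd_def)
  have v: "upd T j a w j (x ! j) = w" for w using assms by (simp add: upd_def)
  have "tab_hash c (upd T j a v) x = Bit_Operations.xor v (F [0..<c] ((\<lambda>i. upd T j a 0 i (x ! i))(j := 0)))"
    unfolding tab_hash_F by (subst F_split[OF j]) (simp only: e v)
  moreover have "tab_hash c (upd T j a 0) x = F [0..<c] ((\<lambda>i. upd T j a 0 i (x ! i))(j := 0))"
    unfolding tab_hash_F by (subst F_split[OF j]) (simp only: v xor.left_neutral)
  ultimately show ?thesis by simp
qed

lemma xor_cancel: "Bit_Operations.xor (Bit_Operations.xor (v::nat) A) (Bit_Operations.xor v B) = Bit_Operations.xor A B"
  by (metis xor.assoc xor.left_commute xor_self_eq xor.left_neutral)

lemma xor_eq_iff: "(Bit_Operations.xor (v::nat) c = g) \<longleftrightarrow> v = Bit_Operations.xor g c"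
  by (metis xor.assoc xor_self_eq xor.right_neutral)


lemma tabs_finite: "finite (tab_tables c s r)"
  unfolding tab_tables_def by (intro finite_PiE) auto

lemma tabs_entry: "T \<in> tab_tables c s r \<Longrightarrow> i < c \<Longrightarrow> a < s \<Longrightarrow> T i a < 2^r"
  unfolding tab_tables_def by (auto simp: PiE_iff)

lemma keys_entry: "x \<in> tab_keys c s \<Longrightarrow> i < c \<Longrightarrow> x ! i < s"
  unfolding tab_keys_def by auto

lemma hash_less: "T \<in> tab_tables c s r \<Longrightarrow> x \<in> tab_keys c s \<Longrightarrow> tab_hash c T x < 2^r"
  unfolding tab_hash_F by (intro F_less) (auto intro: tabs_entry keys_entry)

lemma upd_in:
  assumes "T \<in> tab_tables c s r" "j < c" "a < s" "v < 2^r"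
  shows "upd T j a v \<in> tab_tables c s r"
  using assms unfolding tab_tables_def upd_def by (auto simp: PiE_iff extensional_def)

lemma upd_upd[simp]: "upd (upd T j a v) j a w = upd T j a w"
  by (simp add: upd_def)

lemma upd_self: "T j a = w \<Longrightarrow> upd T j a w = T"
  by (auto simp: upd_def)

lemma card_decomp:
  assumes j: "j < c" and a: "a < s"
  shows "card {T \<in> tab_tables c s r. P T} =
    (\<Sum>T\<in>{T \<in> tab_tables c s r. T j a = 0}. card {v \<in> {0..<(2::nat)^r}. P (upd T j a v)})"
proof -
  let ?S = "tab_tables c s r"
  let ?Z = "{T \<in> ?S. T j a = 0}"
  let ?phi = "\<lambda>(T, v). upd T j a v"
  let ?D = "SIGMA T:?Z. {v \<in> {0..<(2::nat)^r}. P (upd T j a v)}"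
  have inj: "inj_on ?phi ?D"
    by (rule inj_on_inverseI[where g = "\<lambda>T. (upd T j a 0, T j a)"])
       (auto simp: upd_self, simp add: upd_def)
  have img: "?phi ` ?D = {T \<in> ?S. P T}"
  proof
    show "?phi ` ?D \<subseteq> {T \<in> ?S. P T}"
      using j a by (auto intro!: upd_in)
  next
    show "{T \<in> ?S. P T} \<subseteq> ?phi ` ?D"
    proof clarify
      fix T assume T: "T \<in> ?S" "P T"
      have "T = ?phi (upd T j a 0, T j a)" by (simp add: upd_self)
      moreover have "(upd T j a 0, T j a) \<in> ?D"
        using T j a upd_in[OF T(1) j a, of 0] tabs_entry[OF T(1) j a] by (simp add: upd_def)
      ultimately show "T \<in> ?phi ` ?D" by blast
    qed
  qed
  have "card {T \<in> ?S. P T} = card ?D"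
    using card_image[OF inj] img by simp
  also have "\<dots> = (\<Sum>T\<in>?Z. card {v \<in> {0..<(2::nat)^r}. P (upd T j a v)})"
    by (rule card_SigmaI) (auto intro: tabs_finite finite_subset[OF _ tabs_finite])
  finally show ?thesis .
qed

lemma IL:
  assumes j: "j < c" and x: "x \<in> tab_keys c s" and a: "x ! j = a"
    and Einv: "\<And>T v. E (upd T j a v) = E T"
    and ginv: "\<And>T v. g (upd T j a v) = g T"
    and gless: "\<And>T. T \<in> tab_tables c s r \<Longrightarrow> g T < 2^r"
  shows "real (card {T \<in> tab_tables c s r. tab_hash c T x = g T \<and> E T}) =
         real (card {T \<in> tab_tables c s r. E T}) / 2^r"
proof -
  let ?S = "tab_tables c s r"
  let ?Z = "{T \<in> ?S. T j a = 0}"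
  have as: "a < s" using x j a keys_entry by blast
  have "card {T \<in> ?S. E T} = (\<Sum>T\<in>?Z. card {v \<in> {0..<(2::nat)^r}. E (upd T j a v)})"
    by (rule card_decomp[OF j as, where P = E])
  also have "\<dots> = (\<Sum>T\<in>?Z. if E T then 2^r else 0)"
    by (intro sum.cong) (auto simp: Einv)
  also have "\<dots> = 2^r * card {T \<in> ?Z. E T}"
    by (simp add: sum.If_cases tabs_finite Int_def conj_commute)
  finally have 1: "card {T \<in> ?S. E T} = 2^r * card {T \<in> ?Z. E T}" .
  have "card {T \<in> ?S. tab_hash c T x = g T \<and> E T} =
      (\<Sum>T\<in>?Z. card {v \<in> {0..<(2::nat)^r}. tab_hash c (upd T j a v) x = g (upd T j a v) \<and> E (upd T j a v)})"
    by (rule card_decomp[OF j as, where P = "\<lambda>T. tab_hash c T x = g T \<and> E T"])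
  also have "\<dots> = (\<Sum>T\<in>?Z. if E T then 1 else 0)"
  proof (intro sum.cong refl)
    fix T assume T: "T \<in> ?Z"
    have h: "tab_hash c (upd T j a v) x = Bit_Operations.xor v (tab_hash c T x)" for v
      using hash_upd_same[OF j a] T by (simp add: upd_self)
    have hl: "tab_hash c T x < 2^r" using T x hash_less by blast
    have gl: "g T < 2^r" using T gless by blast
    have "{v \<in> {0..<(2::nat)^r}. tab_hash c (upd T j a v) x = g (upd T j a v) \<and> E (upd T j a v)}
        = (if E T then {Bit_Operations.xor (g T) (tab_hash c T x)} else {})"
      using hl gl by (auto simp: h ginv Einv xor_eq_iff intro: xor_less)
    then show "card {v \<in> {0..<(2::nat)^r}. tab_hash c (upd T j a v) x = g (upd T j a v) \<and> E (upd T j a v)}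
        = (if E T then 1 else 0)" by simp
  qed
  also have "\<dots> = card {T \<in> ?Z. E T}"
    by (simp add: sum.If_cases tabs_finite Int_def conj_commute)
  finally show ?thesis using 1 by simp
qed


definition cnt :: "nat \<Rightarrow> nat \<Rightarrow> nat \<Rightarrow> ((nat \<Rightarrow> nat \<Rightarrow> nat) \<Rightarrow> bool) \<Rightarrow> real" where
  "cnt c s r P = real (card {T \<in> tab_tables c s r. P T})"

lemma fin: "finite {T \<in> tab_tables c s r. P T}"
  by (rule finite_subset[OF _ tabs_finite]) auto

lemma cnt_cong: "(\<And>T. T \<in> tab_tables c s r \<Longrightarrow> P T = Q T) \<Longrightarrow> cnt c s r P = cnt c s r Q"
  unfolding cnt_def by (rule arg_cong[where f="\<lambda>A. real (card A)"]) blast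

lemma cnt_mono: "(\<And>T. T \<in> tab_tables c s r \<Longrightarrow> P T \<Longrightarrow> Q T) \<Longrightarrow> cnt c s r P \<le> cnt c s r Q"
  unfolding cnt_def by (intro of_nat_mono card_mono fin) blast

lemma cnt_split: "cnt c s r P = cnt c s r (\<lambda>T. P T \<and> Q T) + cnt c s r (\<lambda>T. P T \<and> \<not> Q T)"
proof -
  have eq: "{T \<in> tab_tables c s r. P T} = {T \<in> tab_tables c s r. P T \<and> Q T} \<union> {T \<in> tab_tables c s r. P T \<and> \<not> Q T}"
    by blast
  have "card {T \<in> tab_tables c s r. P T} = card {T \<in> tab_tables c s r. P T \<and> Q T} + card {T \<in> tab_tables c s r. P T \<and> \<not> Q T}"
    by (subst eq, rule card_Un_disjoint) (rule fin, rule fin, blast)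
  then show ?thesis unfolding cnt_def by simp
qed

lemma cnt_nonneg: "0 \<le> cnt c s r P" by (simp add: cnt_def)

lemma cnt_or: "cnt c s r (\<lambda>T. P T \<or> Q T) \<le> cnt c s r P + cnt c s r Q"
proof -
  have "{T \<in> tab_tables c s r. P T \<or> Q T} = {T \<in> tab_tables c s r. P T} \<union> {T \<in> tab_tables c s r. Q T}"
    by auto
  then have "card {T \<in> tab_tables c s r. P T \<or> Q T} \<le> card {T \<in> tab_tables c s r. P T} + card {T \<in> tab_tables c s r. Q T}"
    by (simp only: card_Un_le)
  then show ?thesis unfolding cnt_def by linarith
qed

lemma cnt_Ex: "finite K \<Longrightarrow> cnt c s r (\<lambda>T. \<exists>k\<in>K. P k T) \<le> (\<Sum>k\<in>K. cnt c s r (P k))"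
proof (induction K rule: finite_induct)
  case empty then show ?case by (simp add: cnt_def)
next
  case (insert k K)
  have "cnt c s r (\<lambda>T. \<exists>k'\<in>insert k K. P k' T) = cnt c s r (\<lambda>T. P k T \<or> (\<exists>k'\<in>K. P k' T))"
    by (intro cnt_cong) auto
  also have "\<dots> \<le> cnt c s r (P k) + cnt c s r (\<lambda>T. \<exists>k'\<in>K. P k' T)" by (rule cnt_or)
  also have "\<dots> \<le> cnt c s r (P k) + (\<Sum>k\<in>K. cnt c s r (P k))" using insert by simp
  finally show ?case using insert by simp
qed

definition invar :: "nat \<Rightarrow> nat \<Rightarrow> ((nat \<Rightarrow> nat \<Rightarrow> nat) \<Rightarrow> 'b) \<Rightarrow> bool" where
  "invar j a P \<longleftrightarrow> (\<forall>T v. P (upd T j a v) = P T)"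

lemma IL':
  assumes "j < c" "x \<in> tab_keys c s" "x ! j = a" "invar j a E" "invar j a g"
    "\<And>T. T \<in> tab_tables c s r \<Longrightarrow> g T < 2^r"
  shows "cnt c s r (\<lambda>T. tab_hash c T x = g T \<and> E T) = cnt c s r E / 2^r"
  unfolding cnt_def by (rule IL) (use assms in \<open>auto simp: invar_def\<close>)

definition errs :: "(nat list \<Rightarrow> nat) \<Rightarrow> nat list list \<Rightarrow> nat" where
  "errs jf xs = (\<Sum>i<length xs. card {k \<in> set (take i xs). k ! jf (xs ! i) = xs ! i ! jf (xs ! i)})"

lemma errs_snoc: "errs jf (xs @ [x]) = errs jf xs + card {k \<in> set xs. k ! jf x = x ! jf x}"
proof -
  have "errs jf (xs @ [x]) = (\<Sum>i<length xs. card {k \<in> set (take i (xs @ [x])). k ! jf ((xs @ [x]) ! i) = (xs @ [x]) ! i ! jf ((xs @ [x]) ! i)})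
     + card {k \<in> set xs. k ! jf x = x ! jf x}"
    unfolding errs_def by simp
  also have "(\<Sum>i<length xs. card {k \<in> set (take i (xs @ [x])). k ! jf ((xs @ [x]) ! i) = (xs @ [x]) ! i ! jf ((xs @ [x]) ! i)})
      = errs jf xs" unfolding errs_def by (intro sum.cong refl) (simp add: nth_append)
  finally show ?thesis .
qed


lemma alg:
  fixes P Q R S U V w n :: real
  assumes "P = Q - R" "S = R + U / n" "S = w / n" "w = V + Q" "n \<ge> 1"
  shows "P - (1 - 1/n) * Q = (U - V) / n"
proof -
  have "R = w / n - U / n" using assms(2,3) by simp
  then have "P = Q - w/n + U/n" using assms(1) by simp
  then show ?thesis using assms(4,5) by (simp add: field_simps)
qed


lemma xor_inj: "Bit_Operations.xor (v::nat) P = Bit_Operations.xor v Q \<longleftrightarrow> P = Q"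
  by (metis xor_cancel xor.left_neutral xor_self_eq xor.assoc)

lemma invar_conj: "invar j a P \<Longrightarrow> invar j a Q \<Longrightarrow> invar j a (\<lambda>T. P T \<and> Q T)"
  by (simp add: invar_def)
lemma invar_disj: "invar j a P \<Longrightarrow> invar j a Q \<Longrightarrow> invar j a (\<lambda>T. P T \<or> Q T)"
  by (simp add: invar_def)
lemma invar_bex: "(\<And>k. k \<in> K \<Longrightarrow> invar j a (P k)) \<Longrightarrow> invar j a (\<lambda>T. \<exists>k\<in>K. P k T)"
  by (simp add: invar_def)
lemma invar_const: "invar j a (\<lambda>T. y)"
  by (simp add: invar_def)

lemma invar_hash_other: "x ! j \<noteq> a \<Longrightarrow> invar j a (\<lambda>T. tab_hash c T x)"
  by (simp add: invar_def hash_upd_other)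

lemma invar_image: "(\<And>k. k \<in> K \<Longrightarrow> k ! j \<noteq> a) \<Longrightarrow> invar j a (\<lambda>T. y \<in> (\<lambda>k. tab_hash c T k) ` K)"
proof -
  assume K: "\<And>k. k \<in> K \<Longrightarrow> k ! j \<noteq> a"
  have "(\<lambda>k. tab_hash c (upd T j a v) k) ` K = (\<lambda>k. tab_hash c T k) ` K" for T v
    by (intro image_cong refl) (simp add: hash_upd_other K)
  then show ?thesis by (simp add: invar_def)
qed

lemma invar_pair:
  assumes "j < c" "k ! j = a" "x ! j = a"
  shows "invar j a (\<lambda>T. tab_hash c T k = tab_hash c T x)"
  unfolding invar_def
proof (intro allI)
  fix T v
  have T: "T = upd T j a (T j a)" by (simp add: upd_self)
  have "tab_hash c T k = tab_hash c T x \<longleftrightarrow> tab_hash c (upd T j a (T j a)) k = tab_hash c (upd T j a (T j a)) x"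
    using T by simp
  also have "\<dots> \<longleftrightarrow> tab_hash c (upd T j a 0) k = tab_hash c (upd T j a 0) x"
    unfolding hash_upd_same[OF assms(1) assms(2), of T "T j a"] hash_upd_same[OF assms(1) assms(3), of T "T j a"]
    by (rule xor_inj)
  also have "\<dots> \<longleftrightarrow> tab_hash c (upd T j a v) k = tab_hash c (upd T j a v) x"
    unfolding hash_upd_same[OF assms(1) assms(2), of T v] hash_upd_same[OF assms(1) assms(3), of T v]
    by (rule xor_inj[symmetric])
  finally show "(tab_hash c (upd T j a v) k = tab_hash c (upd T j a v) x) = (tab_hash c T k = tab_hash c T x)"
    by simp
qed

lemma step:
  fixes W :: "(nat \<Rightarrow> nat \<Rightarrow> nat) \<Rightarrow> bool"
  assumes x: "x \<in> tab_keys c s" and xs: "set xs \<subseteq> tab_keys c s" and xn: "x \<notin> set xs"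
    and j: "j < c" and Wi: "invar j (x ! j) W" and y: "y < 2^r"
    and PW: "\<And>k. k \<in> set xs \<Longrightarrow> cnt c s r (\<lambda>T. W T \<and> tab_hash c T k = tab_hash c T x) = cnt c s r W / 2^r"
    and PW1: "\<And>k. k \<in> set xs \<Longrightarrow> cnt c s r (\<lambda>T. W T \<and> tab_hash c T k = y) = cnt c s r W / 2^r"
  shows "\<bar>cnt c s r (\<lambda>T. W T \<and> y \<notin> (\<lambda>k. tab_hash c T k) ` set (xs @ [x]))
          - (1 - 1 / 2^r) * cnt c s r (\<lambda>T. W T \<and> y \<notin> (\<lambda>k. tab_hash c T k) ` set xs)\<bar>
         \<le> real (card {k \<in> set xs. k ! j = x ! j}) * cnt c s r W / (2^r)^2"
proof -
  define a where "a = x ! j"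
  define K where "K = {k \<in> set xs. k ! j = a}"
  define h where "h = (\<lambda>T k. tab_hash c T k)"
  define A where "A = (\<lambda>T. y \<in> h T ` (set xs - K))"
  define B where "B = (\<lambda>T. \<exists>k\<in>K. h T k = h T x)"
  define B' where "B' = (\<lambda>T. \<exists>k\<in>K. h T k = y)"
  define Y where "Y = (\<lambda>T. y \<in> h T ` set xs)"
  define N where "N = cnt c s r"
  define n :: real where "n = 2^r"
  have n1: "n \<ge> 1" unfolding n_def by simp
  have finK: "finite K" unfolding K_def by simp
  have Y_eq: "Y T = (A T \<or> B' T)" for T
    unfolding Y_def A_def B'_def K_def by blast
  have YE: "(h T x = y \<and> Y T) = (h T x = y \<and> (A T \<or> B T))" for T
    unfolding Y_def A_def B_def K_def by (auto intro: image_eqI) (metis image_eqI)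
  have invA: "invar j a A" unfolding A_def h_def by (rule invar_image) (auto simp: K_def)
  have invB: "invar j a B" unfolding B_def h_def
    by (rule invar_bex, rule invar_pair[OF j]) (auto simp: K_def a_def)
  have Wi': "invar j a W" using Wi by (simp add: a_def)
  have IL1: "N (\<lambda>T. h T x = y \<and> E T) = N E / n" if "invar j a E" for E
    unfolding N_def h_def n_def
    by (rule IL'[OF j x a_def[symmetric] that invar_const]) (simp add: y)
  have e1: "N (\<lambda>T. W T \<and> y \<notin> h T ` set (xs @ [x])) = N (\<lambda>T. W T \<and> \<not> Y T) - N (\<lambda>T. W T \<and> \<not> Y T \<and> h T x = y)"
  proof -
    have "N (\<lambda>T. W T \<and> \<not> Y T) = N (\<lambda>T. (W T \<and> \<not> Y T) \<and> h T x = y) + N (\<lambda>T. (W T \<and> \<not> Y T) \<and> \<not> h T x = y)"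
      unfolding N_def by (rule cnt_split)
    moreover have "N (\<lambda>T. (W T \<and> \<not> Y T) \<and> \<not> h T x = y) = N (\<lambda>T. W T \<and> y \<notin> h T ` set (xs @ [x]))"
      unfolding N_def by (intro cnt_cong) (auto simp: Y_def)
    moreover have "N (\<lambda>T. (W T \<and> \<not> Y T) \<and> h T x = y) = N (\<lambda>T. W T \<and> \<not> Y T \<and> h T x = y)"
      unfolding N_def by (intro cnt_cong) auto
    ultimately show ?thesis by linarith
  qed
  have e2: "N (\<lambda>T. W T \<and> h T x = y) = N (\<lambda>T. W T \<and> \<not> Y T \<and> h T x = y) + N (\<lambda>T. W T \<and> (A T \<or> B T)) / n"
  proof -
    have "N (\<lambda>T. W T \<and> h T x = y) = N (\<lambda>T. (W T \<and> h T x = y) \<and> Y T) + N (\<lambda>T. (W T \<and> h T x = y) \<and> \<not> Y T)"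
      unfolding N_def by (rule cnt_split)
    moreover have "N (\<lambda>T. (W T \<and> h T x = y) \<and> Y T) = N (\<lambda>T. h T x = y \<and> (W T \<and> (A T \<or> B T)))"
      unfolding N_def using YE by (intro cnt_cong) blast
    moreover have "N (\<lambda>T. h T x = y \<and> (W T \<and> (A T \<or> B T))) = N (\<lambda>T. W T \<and> (A T \<or> B T)) / n"
      by (rule IL1) (intro invar_conj invar_disj Wi' invA invB)
    moreover have "N (\<lambda>T. (W T \<and> h T x = y) \<and> \<not> Y T) = N (\<lambda>T. W T \<and> \<not> Y T \<and> h T x = y)"
      unfolding N_def by (intro cnt_cong) auto
    ultimately show ?thesis by linarith
  qed
  have e3: "N (\<lambda>T. W T \<and> h T x = y) = N W / n"
  proof -
    have "N (\<lambda>T. W T \<and> h T x = y) = N (\<lambda>T. h T x = y \<and> W T)"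
      unfolding N_def by (intro cnt_cong) auto
    also have "\<dots> = N W / n" by (rule IL1[OF Wi'])
    finally show ?thesis .
  qed
  have e4: "N W = N (\<lambda>T. W T \<and> (A T \<or> B' T)) + N (\<lambda>T. W T \<and> \<not> Y T)"
  proof -
    have "N W = N (\<lambda>T. W T \<and> Y T) + N (\<lambda>T. W T \<and> \<not> Y T)"
      unfolding N_def by (rule cnt_split)
    moreover have "N (\<lambda>T. W T \<and> Y T) = N (\<lambda>T. W T \<and> (A T \<or> B' T))"
      unfolding N_def using Y_eq by (intro cnt_cong) blast
    ultimately show ?thesis by linarith
  qed
  have bA1: "N (\<lambda>T. W T \<and> A T) \<le> N (\<lambda>T. W T \<and> (A T \<or> B T))"
    unfolding N_def by (intro cnt_mono) auto
  have bA2: "N (\<lambda>T. W T \<and> A T) \<le> N (\<lambda>T. W T \<and> (A T \<or> B' T))"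
    unfolding N_def by (intro cnt_mono) auto
  have bB: "N (\<lambda>T. W T \<and> (A T \<or> B T)) \<le> N (\<lambda>T. W T \<and> A T) + card K * N W / n"
  proof -
    have "N (\<lambda>T. W T \<and> (A T \<or> B T)) \<le> N (\<lambda>T. (W T \<and> A T) \<or> (\<exists>k\<in>K. W T \<and> h T k = h T x))"
      unfolding N_def B_def by (intro cnt_mono) auto
    also have "\<dots> \<le> N (\<lambda>T. W T \<and> A T) + N (\<lambda>T. \<exists>k\<in>K. W T \<and> h T k = h T x)"
      unfolding N_def by (rule cnt_or)
    also have "N (\<lambda>T. \<exists>k\<in>K. W T \<and> h T k = h T x) \<le> (\<Sum>k\<in>K. N (\<lambda>T. W T \<and> h T k = h T x))"
      unfolding N_def using cnt_Ex[OF finK, of c s r "\<lambda>k T. W T \<and> h T k = h T x"] by simp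
    also have "\<dots> = (\<Sum>k\<in>K. N W / n)"
      by (intro sum.cong refl) (auto simp: N_def n_def h_def K_def PW)
    also have "\<dots> = card K * N W / n" by simp
    finally show ?thesis by simp
  qed
  have bB': "N (\<lambda>T. W T \<and> (A T \<or> B' T)) \<le> N (\<lambda>T. W T \<and> A T) + card K * N W / n"
  proof -
    have "N (\<lambda>T. W T \<and> (A T \<or> B' T)) \<le> N (\<lambda>T. (W T \<and> A T) \<or> (\<exists>k\<in>K. W T \<and> h T k = y))"
      unfolding N_def B'_def by (intro cnt_mono) auto
    also have "\<dots> \<le> N (\<lambda>T. W T \<and> A T) + N (\<lambda>T. \<exists>k\<in>K. W T \<and> h T k = y)"
      unfolding N_def by (rule cnt_or)
    also have "N (\<lambda>T. \<exists>k\<in>K. W T \<and> h T k = y) \<le> (\<Sum>k\<in>K. N (\<lambda>T. W T \<and> h T k = y))"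
      unfolding N_def using cnt_Ex[OF finK, of c s r "\<lambda>k T. W T \<and> h T k = y"] by simp
    also have "\<dots> = (\<Sum>k\<in>K. N W / n)"
      by (intro sum.cong refl) (auto simp: N_def n_def h_def K_def PW1)
    also have "\<dots> = card K * N W / n" by simp
    finally show ?thesis by simp
  qed
  have NW: "N W \<ge> 0" unfolding N_def by (rule cnt_nonneg)
  define D where "D = N (\<lambda>T. W T \<and> (A T \<or> B T)) - N (\<lambda>T. W T \<and> (A T \<or> B' T))"
  have Dle: "\<bar>D\<bar> \<le> card K * N W / n" unfolding D_def using bA1 bA2 bB bB' by linarith
  have key: "N (\<lambda>T. W T \<and> y \<notin> h T ` set (xs @ [x])) - (1 - 1/n) * N (\<lambda>T. W T \<and> \<not> Y T) = D / n"
    unfolding D_def by (rule alg[OF e1 e2 e3 e4 n1])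
  have "\<bar>D / n\<bar> = \<bar>D\<bar> / n" using n1 by simp
  also have "\<dots> \<le> card K * N W / n / n"
    using Dle n1 by (intro divide_right_mono) auto
  finally have "\<bar>D / n\<bar> \<le> card K * N W / n / n" .
  then have "\<bar>N (\<lambda>T. W T \<and> y \<notin> h T ` set (xs @ [x])) - (1 - 1/n) * N (\<lambda>T. W T \<and> \<not> Y T)\<bar> \<le> card K * N W / n^2"
    using key by (simp add: power2_eq_square)
  then show ?thesis unfolding N_def h_def n_def Y_def K_def a_def by simp
qed


lemma main_ind:
  fixes W :: "(nat \<Rightarrow> nat \<Rightarrow> nat) \<Rightarrow> bool"
  assumes "distinct xs" "set xs \<subseteq> tab_keys c s" "y < 2^r"
    and hj: "\<And>x. x \<in> set xs \<Longrightarrow> jf x < c \<and> invar (jf x) (x ! jf x) W"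
    and PW: "\<And>k x. k \<in> set xs \<Longrightarrow> x \<in> set xs \<Longrightarrow> k \<noteq> x \<Longrightarrow>
               cnt c s r (\<lambda>T. W T \<and> tab_hash c T k = tab_hash c T x) = cnt c s r W / 2^r"
    and PW1: "\<And>k. k \<in> set xs \<Longrightarrow> cnt c s r (\<lambda>T. W T \<and> tab_hash c T k = y) = cnt c s r W / 2^r"
  shows "\<bar>cnt c s r (\<lambda>T. W T \<and> y \<notin> (\<lambda>k. tab_hash c T k) ` set xs) - (1 - 1/2^r)^length xs * cnt c s r W\<bar>
         \<le> cnt c s r W / (2^r)^2 * errs jf xs"
  using assms
proof (induction xs rule: rev_induct)
  case Nil
  then show ?case by (simp add: errs_def)
next
  case (snoc x xs)
  define n :: real where "n = 2^r"
  have n1: "n \<ge> 1" unfolding n_def by simp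
  define w where "w = cnt c s r W"
  define a where "a = cnt c s r (\<lambda>T. W T \<and> y \<notin> (\<lambda>k. tab_hash c T k) ` set xs)"
  define a' where "a' = cnt c s r (\<lambda>T. W T \<and> y \<notin> (\<lambda>k. tab_hash c T k) ` set (xs @ [x]))"
  define kk where "kk = real (card {k \<in> set xs. k ! jf x = x ! jf x})"
  have w0: "w \<ge> 0" unfolding w_def by (rule cnt_nonneg)
  have IH: "\<bar>a - (1 - 1/n)^length xs * w\<bar> \<le> w / n^2 * errs jf xs"
    unfolding a_def w_def n_def
    by (rule snoc.IH) (use snoc.prems in auto)
  have st: "\<bar>a' - (1 - 1/n) * a\<bar> \<le> kk * w / n^2"
    unfolding a'_def a_def kk_def w_def n_def
    by (rule step) (use snoc.prems in \<open>auto intro: snoc.prems(5) snoc.prems(6)\<close>)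
  have q0: "0 \<le> 1 - 1/n" and q1: "1 - 1/n \<le> 1" using n1 by (auto simp: field_simps)
  have "\<bar>a' - (1 - 1/n)^length (xs @ [x]) * w\<bar> = \<bar>(a' - (1 - 1/n) * a) + (1 - 1/n) * (a - (1 - 1/n)^length xs * w)\<bar>"
    by (simp add: algebra_simps)
  also have "\<dots> \<le> \<bar>a' - (1 - 1/n) * a\<bar> + (1 - 1/n) * \<bar>a - (1 - 1/n)^length xs * w\<bar>"
    using q0 by (simp add: abs_triangle_ineq[THEN order_trans] abs_mult)
  also have "\<dots> \<le> kk * w / n^2 + 1 * (w / n^2 * errs jf xs)"
    using st IH q0 q1 by (intro add_mono mult_mono) (auto intro: order_trans[OF abs_ge_zero])
  also have "\<dots> = w / n^2 * errs jf (xs @ [x])"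
    unfolding errs_snoc kk_def by (simp add: algebra_simps)
  finally show ?case unfolding a'_def w_def n_def .
qed


definition dcount :: "(nat list \<Rightarrow> nat) \<Rightarrow> nat list set \<Rightarrow> nat list \<Rightarrow> nat" where
  "dcount jf X x = card {k \<in> X. k \<noteq> x \<and> k ! jf x = x ! jf x}"

lemma errs_Cons:
  assumes "distinct (x # ys)"
  shows "errs jf (x # ys) = errs jf ys + card {k \<in> set ys. x ! jf k = k ! jf k}"
proof -
  have "errs jf (x # ys) = (\<Sum>i<Suc (length ys). card {k \<in> set (take i (x # ys)). k ! jf ((x # ys) ! i) = (x # ys) ! i ! jf ((x # ys) ! i)})"
    unfolding errs_def by simp
  also have "\<dots> = (\<Sum>i<length ys. card {k \<in> set (take (Suc i) (x # ys)). k ! jf ((x # ys) ! Suc i) = (x # ys) ! Suc i ! jf ((x # ys) ! Suc i)})"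
    by (subst sum.lessThan_Suc_shift) simp
  also have "\<dots> = (\<Sum>i<length ys. card {k \<in> set (take i ys). k ! jf (ys ! i) = ys ! i ! jf (ys ! i)}
                   + (if x ! jf (ys ! i) = ys ! i ! jf (ys ! i) then 1 else 0))"
  proof (intro sum.cong refl)
    fix i assume i: "i \<in> {..<length ys}"
    have xn: "x \<notin> set (take i ys)" using assms by (auto dest: in_set_takeD)
    have "{k \<in> set (take (Suc i) (x # ys)). k ! jf ((x # ys) ! Suc i) = (x # ys) ! Suc i ! jf ((x # ys) ! Suc i)}
        = (if x ! jf (ys ! i) = ys ! i ! jf (ys ! i) then insert x else id) {k \<in> set (take i ys). k ! jf (ys ! i) = ys ! i ! jf (ys ! i)}"
      by auto
    then show "card {k \<in> set (take (Suc i) (x # ys)). k ! jf ((x # ys) ! Suc i) = (x # ys) ! Suc i ! jf ((x # ys) ! Suc i)}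
        = card {k \<in> set (take i ys). k ! jf (ys ! i) = ys ! i ! jf (ys ! i)} + (if x ! jf (ys ! i) = ys ! i ! jf (ys ! i) then 1 else 0)"
      using xn by simp
  qed
  also have "\<dots> = errs jf ys + (\<Sum>i<length ys. if x ! jf (ys ! i) = ys ! i ! jf (ys ! i) then 1 else 0)"
    unfolding errs_def by (simp add: sum.distrib)
  also have "(\<Sum>i<length ys. if x ! jf (ys ! i) = ys ! i ! jf (ys ! i) then 1 else 0) = card {k \<in> set ys. x ! jf k = k ! jf k}"
  proof -
    have d: "distinct ys" using assms by simp
    have "(\<Sum>i<length ys. if x ! jf (ys ! i) = ys ! i ! jf (ys ! i) then 1 else (0::nat))
        = (\<Sum>k\<in>set ys. if x ! jf k = k ! jf k then 1 else 0)"
    proof -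
      have img: "(!) ys ` {..<length ys} = set ys" by (auto simp: in_set_conv_nth)
      have inj: "inj_on ((!) ys) {..<length ys}" by (rule inj_on_nth[OF d]) simp
      show ?thesis
        using sum.reindex[OF inj, of "\<lambda>k. if x ! jf k = k ! jf k then 1 else (0::nat)"]
        by (simp add: img o_def)
    qed
    also have "\<dots> = card {k \<in> set ys. x ! jf k = k ! jf k}"
      by (simp add: sum.If_cases Int_def)
    finally show ?thesis .
  qed
  finally show ?thesis .
qed

lemma errs_rev_sum:
  assumes "distinct xs"
  shows "errs jf xs + errs jf (rev xs) = (\<Sum>x\<in>set xs. dcount jf (set xs) x)"
  using assms
proof (induction xs)
  case Nil then show ?case by (simp add: errs_def)
next
  case (Cons x ys)
  have d: "distinct ys" "x \<notin> set ys" using Cons.prems by auto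
  have r1: "errs jf (x # ys) = errs jf ys + card {k \<in> set ys. x ! jf k = k ! jf k}"
    by (rule errs_Cons[OF Cons.prems])
  have r2: "errs jf (rev (x # ys)) = errs jf (rev ys) + card {k \<in> set ys. k ! jf x = x ! jf x}"
    by (simp add: errs_snoc)
  have s1: "dcount jf (set (x # ys)) x = card {k \<in> set ys. k ! jf x = x ! jf x}"
    unfolding dcount_def using d by (intro arg_cong[where f = card]) auto
  have s2: "dcount jf (set (x # ys)) z = dcount jf (set ys) z + (if x ! jf z = z ! jf z then 1 else 0)"
    if z: "z \<in> set ys" for z
  proof -
    have "{k \<in> set (x # ys). k \<noteq> z \<and> k ! jf z = z ! jf z} =
      (if x ! jf z = z ! jf z then insert x else id) {k \<in> set ys. k \<noteq> z \<and> k ! jf z = z ! jf z}"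
      using z d by auto
    then show ?thesis unfolding dcount_def using d by simp
  qed
  have "(\<Sum>z\<in>set (x # ys). dcount jf (set (x # ys)) z)
      = dcount jf (set (x # ys)) x + (\<Sum>z\<in>set ys. dcount jf (set (x # ys)) z)"
    using d by simp
  also have "(\<Sum>z\<in>set ys. dcount jf (set (x # ys)) z) = (\<Sum>z\<in>set ys. dcount jf (set ys) z) + (\<Sum>z\<in>set ys. if x ! jf z = z ! jf z then 1 else 0)"
    by (subst sum.distrib[symmetric]) (rule sum.cong[OF refl s2])
  also have "(\<Sum>z\<in>set ys. if x ! jf z = z ! jf z then 1 else 0) = card {k \<in> set ys. x ! jf k = k ! jf k}"
    by (simp add: sum.If_cases Int_def)
  finally show ?case using r1 r2 s1 Cons.IH[OF d(1)] by simp
qed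


lemma bern_pow:
  fixes M :: real assumes "M \<ge> 0"
  shows "(M + 1)^(Suc k) \<ge> M^(Suc k) + (Suc k) * M^k"
proof (induction k)
  case 0 then show ?case by simp
next
  case (Suc k)
  have "(M + 1)^(Suc (Suc k)) = (M + 1) * (M + 1)^(Suc k)" by simp
  also have "\<dots> \<ge> (M + 1) * (M^(Suc k) + (Suc k) * M^k)"
    using Suc assms by (intro mult_left_mono) auto
  finally have "(M + 1)^(Suc (Suc k)) \<ge> (M + 1) * (M^(Suc k) + (Suc k) * M^k)" .
  moreover have "(M + 1) * (M^(Suc k) + (Suc k) * M^k) \<ge> M^(Suc (Suc k)) + (Suc (Suc k)) * M^(Suc k)"
    using assms by (simp add: algebra_simps)
  ultimately show ?case by linarith
qed

lemma frac_aux: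
  fixes P Q R k :: real
  assumes "P > 0" "Q > 0" "R > 0" "k * (P * Q) \<le> (Q - P) * R"
  shows "k / R \<le> 1 / P - 1 / Q"
proof -
  have "1 / P - 1 / Q = (Q - P) / (P * Q)" using assms by (simp add: field_simps)
  moreover have "k / R \<le> (Q - P) / (P * Q)"
    using assms by (simp add: divide_le_eq le_divide_eq mult.commute mult.left_commute)
  ultimately show ?thesis by simp
qed

lemma tele_step:
  fixes M :: real assumes M: "M \<ge> 1" and k: "k \<ge> 1"
  shows "k / (M + 1)^(k+1) \<le> 1 / M^k - 1 / (M + 1)^k"
proof -
  obtain k' where k': "k = Suc k'" using k by (cases k) auto
  have b: "(M + 1)^k \<ge> M^k + k * M^k'" using bern_pow[of M k'] M k' by simp
  have pM: "M^k > 0" "(M+1)^k > 0" using M by auto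
  have "k * M^k \<le> (M + 1) * ((M + 1)^k - M^k)"
  proof -
    have "k * M^k = k * M^k' * M" using k' by (simp add: algebra_simps)
    also have "\<dots> \<le> k * M^k' * (M + 1)" using M by (intro mult_left_mono) auto
    also have "\<dots> \<le> ((M + 1)^k - M^k) * (M + 1)" using b M by (intro mult_right_mono) auto
    finally show ?thesis by (simp add: algebra_simps)
  qed
  then have "k * M^k * (M + 1)^k \<le> (M + 1) * ((M + 1)^k - M^k) * (M + 1)^k"
    using pM by (intro mult_right_mono) auto
  then have "k * (M^k * (M + 1)^k) \<le> ((M + 1)^k - M^k) * (M + 1)^(k+1)"
    by (simp add: algebra_simps)
  then show ?thesis using pM M by (intro frac_aux) auto
qed

lemma tele:
  assumes T: "T \<ge> 1" and k: "k \<ge> 1" and TM: "T \<le> M"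
  shows "(\<Sum>t\<in>{T<..M}. 1 / real t^(k+1)) \<le> (1 / real T^k - 1 / real M^k) / k"
  using TM
proof (induction M rule: dec_induct)
  case base then show ?case by simp
next
  case (step M)
  have "{T<..Suc M} = insert (Suc M) {T<..M}" using step by auto
  then have "(\<Sum>t\<in>{T<..Suc M}. 1 / real t^(k+1)) = 1 / real (Suc M)^(k+1) + (\<Sum>t\<in>{T<..M}. 1 / real t^(k+1))"
    by simp
  also have "\<dots> \<le> (1 / real M^k - 1 / real (Suc M)^k) / k + (1 / real T^k - 1 / real M^k) / k"
  proof (intro add_mono step.IH)
    have "real M \<ge> 1" using step T by simp
    from tele_step[OF this k] show "1 / real (Suc M)^(k+1) \<le> (1 / real M^k - 1 / real (Suc M)^k) / k"
      using k by (simp add: field_simps)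
  qed
  also have "\<dots> = (1 / real T^k - 1 / real (Suc M)^k) / k" by (subst add_divide_distrib[symmetric]) simp
  finally show ?case .
qed

lemma tele':
  assumes T: "T \<ge> 1" and k: "k \<ge> 1"
  shows "(\<Sum>t\<in>{T<..M}. 1 / real t^(k+1)) \<le> 1 / (k * real T^k)"
proof (cases "T \<le> M")
  case True
  have "(\<Sum>t\<in>{T<..M}. 1 / real t^(k+1)) \<le> (1 / real T^k - 1 / real M^k) / k" by (rule tele[OF T k True])
  also have "\<dots> \<le> (1 / real T^k) / k" using k by (intro divide_right_mono) auto
  finally show ?thesis by (simp add: mult.commute)
next
  case False
  then have "{T<..M} = {}" by auto
  then show ?thesis by simp
qed

lemma analytic:
  fixes g :: "nat \<Rightarrow> real" and \<beta> :: real
  assumes c: "c \<ge> 2" and m: "m \<ge> 1" and b: "\<beta> \<ge> 1"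
    and g0: "\<And>t. t \<in> {2..m} \<Longrightarrow> g t \<le> m"
    and g1: "\<And>t. t \<in> {2..m} \<Longrightarrow> g t \<le> (\<beta> * m / t)^c"
  shows "(\<Sum>t\<in>{2..m}. g t) \<le> 2 * \<beta> * real m powr (2 - 1 / c)"
proof -
  define \<tau> where "\<tau> = \<beta> * real m powr (1 - 1 / c)"
  have mp: "real m powr (1 - 1/c) \<ge> 1" using m c by (intro ge_one_powr_ge_zero) (auto simp: field_simps)
  have tau1: "\<tau> \<ge> 1" unfolding \<tau>_def using mult_mono[OF b mp] b by simp
  define T where "T = nat \<lceil>\<tau>\<rceil>"
  have T1: "T \<ge> 1" unfolding T_def using tau1 by linarith
  have Tge: "real T \<ge> \<tau>" unfolding T_def by linarith
  have Tlt: "real T < \<tau> + 1" unfolding T_def using tau1 by linarith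
  define k where "k = c - 1"
  have k1: "k \<ge> 1" and ck: "c = k + 1" unfolding k_def using c by auto
  have taupow: "\<tau>^c = \<beta>^c * real m^(c-1)"
  proof -
    have "(real m powr (1 - 1/c))^c = real m powr ((1 - 1/c) * c)"
      using m by (simp add: powr_realpow[symmetric] powr_powr)
    also have "(1 - 1/c) * c = real (c - 1)" using c by (simp add: field_simps of_nat_diff)
    also have "real m powr real (c - 1) = real m^(c-1)" using m by (simp add: powr_realpow)
    finally show ?thesis unfolding \<tau>_def by (simp add: power_mult_distrib)
  qed
  have bmc: "(\<beta> * m)^c = m * \<tau>^c"
  proof -
    have "real m ^ c = real m * real m ^ (c - 1)" using ck k_def by (simp add: power_Suc[symmetric])
    then show ?thesis using taupow by (simp add: power_mult_distrib)
  qed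
  have split: "{2..m} = {t\<in>{2..m}. t \<le> T} \<union> {t\<in>{2..m}. T < t}" by auto
  have "(\<Sum>t\<in>{2..m}. g t) = (\<Sum>t\<in>{t\<in>{2..m}. t \<le> T}. g t) + (\<Sum>t\<in>{t\<in>{2..m}. T < t}. g t)"
    by (subst split, rule sum.union_disjoint) auto
  also have "(\<Sum>t\<in>{t\<in>{2..m}. t \<le> T}. g t) \<le> (\<Sum>t\<in>{t\<in>{2..m}. t \<le> T}. real m)"
    by (intro sum_mono g0) auto
  also have "\<dots> = card {t\<in>{2..m}. t \<le> T} * real m" by simp
  also have "\<dots> \<le> (real T - 1) * real m"
  proof -
    have "{t\<in>{2..m}. t \<le> T} \<subseteq> {2..T}" by auto
    then have "card {t\<in>{2..m}. t \<le> T} \<le> T - 1" using card_mono[of "{2..T}"] by fastforce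
    then have "real (card {t\<in>{2..m}. t \<le> T}) \<le> real T - 1" using T1 by linarith
    then show ?thesis by (intro mult_right_mono) auto
  qed
  also have "(\<Sum>t\<in>{t\<in>{2..m}. T < t}. g t) \<le> (\<Sum>t\<in>{T<..m}. (\<beta> * m)^c * (1 / real t^(k+1)))"
  proof -
    have "(\<Sum>t\<in>{t\<in>{2..m}. T < t}. g t) \<le> (\<Sum>t\<in>{t\<in>{2..m}. T < t}. (\<beta> * m)^c * (1 / real t^(k+1)))"
    proof (intro sum_mono)
      fix t assume t: "t \<in> {t\<in>{2..m}. T < t}"
      have "(\<beta> * m / t)^c = (\<beta> * m)^c * (1 / real t^(k+1))" by (simp add: power_divide ck)
      then show "g t \<le> (\<beta> * m)^c * (1 / real t^(k+1))" using g1[of t] t by simp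
    qed
    also have "\<dots> \<le> (\<Sum>t\<in>{T<..m}. (\<beta> * m)^c * (1 / real t^(k+1)))"
      by (intro sum_mono2) (use T1 b in auto)
    finally show ?thesis .
  qed
  also have "(\<Sum>t\<in>{T<..m}. (\<beta> * m)^c * (1 / real t^(k+1))) = (\<beta> * m)^c * (\<Sum>t\<in>{T<..m}. 1 / real t^(k+1))"
    by (simp add: sum_distrib_left)
  also have "\<dots> \<le> (\<beta> * m)^c * (1 / (k * real T^k))"
    using b by (intro mult_left_mono tele'[OF T1 k1]) auto
  also have "\<dots> \<le> m * \<tau>^c * (1 / (k * \<tau>^k))"
  proof -
    have p: "\<tau>^k \<le> real T^k" using Tge tau1 by (intro power_mono) auto
    have "1 / (k * real T^k) \<le> 1 / (k * \<tau>^k)"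
    proof (rule divide_left_mono)
      show "k * \<tau>^k \<le> k * real T^k" using p by (intro mult_left_mono) auto
      show "0 < k * real T^k * (k * \<tau>^k)" using k1 tau1 T1 by simp
    qed simp
    moreover have "0 \<le> m * \<tau>^c" using tau1 by simp
    ultimately show ?thesis unfolding bmc by (rule mult_left_mono)
  qed
  also have "m * \<tau>^c * (1 / (k * \<tau>^k)) = m * \<tau> / k"
    using tau1 ck by (simp add: field_simps)
  also have "\<dots> \<le> m * \<tau>"
  proof -
    have "m * \<tau> * 1 \<le> m * \<tau> * k" using k1 tau1 by (intro mult_left_mono) auto
    then show ?thesis using k1 by (simp add: pos_divide_le_eq)
  qed
  finally have "(\<Sum>t\<in>{2..m}. g t) \<le> (real T - 1) * real m + m * \<tau>" by simp
  also have "\<dots> \<le> \<tau> * real m + m * \<tau>" using Tlt tau1 by (intro add_mono mult_right_mono) auto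
  also have "\<dots> = 2 * (m * \<tau>)" by simp
  also have "2 * (m * \<tau>) = 2 * \<beta> * real m powr (2 - 1 / c)"
  proof -
    have "real m * real m powr (1 - 1/c) = real m powr (2 - 1/c)"
    proof -
      have "real m powr (2 - 1/c) = real m powr (1 + (1 - 1/c))" by (simp add: algebra_simps)
      also have "\<dots> = real m powr 1 * real m powr (1 - 1/c)" by (rule powr_add)
      also have "real m powr 1 = real m" using m by simp
      finally show ?thesis by simp
    qed
    then show ?thesis unfolding \<tau>_def by (simp add: algebra_simps)
  qed
  finally show ?thesis .
qed


lemma card_lists_le:
  assumes L: "L \<subseteq> {x. length x = c \<and> (\<forall>j<c. x ! j \<in> A j)}" and fin: "\<And>j. j < c \<Longrightarrow> finite (A j)"
  shows "card L \<le> (\<Prod>j<c. card (A j))"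
proof -
  let ?phi = "\<lambda>x. restrict (\<lambda>j. x ! j) {..<c}"
  have inj: "inj_on ?phi L"
  proof (rule inj_onI)
    fix x y assume x: "x \<in> L" and y: "y \<in> L" and e: "?phi x = ?phi y"
    have "length x = c" "length y = c" using x y L by auto
    moreover have "x ! j = y ! j" if "j < c" for j
      using fun_cong[OF e, of j] that by simp
    ultimately show "x = y" by (intro nth_equalityI) auto
  qed
  have sub: "?phi ` L \<subseteq> PiE {..<c} A"
  proof
    fix p assume "p \<in> ?phi ` L"
    then obtain x where x: "x \<in> L" and p: "p = ?phi x" by blast
    have "\<forall>j\<in>{..<c}. x ! j \<in> A j" using x L by auto
    then show "p \<in> PiE {..<c} A" unfolding p by (rule restrict_PiE_iff[THEN iffD2])
  qed
  have finP: "finite (PiE {..<c} A)" by (intro finite_PiE) (auto intro: fin)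
  have "card L = card (?phi ` L)" by (rule card_image[OF inj, symmetric])
  also have "\<dots> \<le> card (PiE {..<c} A)" by (rule card_mono[OF finP sub])
  also have "\<dots> = (\<Prod>j<c. card (A j))" by (rule card_PiE) simp
  finally show ?thesis .
qed

lemma heavy_card:
  fixes X :: "nat list set"
  assumes fin: "finite X" and t: "t \<ge> 1"
  shows "real (card {a \<in> (\<lambda>k. k ! j) ` X. t \<le> card {k \<in> X. k ! j = a}}) \<le> real (card X) / t"
proof -
  define H where "H = {a \<in> (\<lambda>k. k ! j) ` X. t \<le> card {k \<in> X. k ! j = a}}"
  have finH: "finite H" unfolding H_def using fin by simp
  have "t * card H = (\<Sum>a\<in>H. t)" by simp
  also have "\<dots> \<le> (\<Sum>a\<in>H. card {k \<in> X. k ! j = a})" by (intro sum_mono) (auto simp: H_def)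
  also have "\<dots> = card (\<Union>a\<in>H. {k \<in> X. k ! j = a})"
    by (rule card_UN_disjoint[symmetric]) (use finH fin in auto)
  also have "\<dots> \<le> card X" by (intro card_mono fin) auto
  finally have "t * card H \<le> card X" .
  then have "real t * real (card H) \<le> real (card X)" by (metis of_nat_le_iff of_nat_mult)
  then show ?thesis unfolding H_def[symmetric] using t by (simp add: field_simps)
qed

lemma sum_layers:
  fixes f :: "'a \<Rightarrow> nat"
  assumes fin: "finite X" and f: "\<And>x. x \<in> X \<Longrightarrow> 1 \<le> f x \<and> f x \<le> m"
  shows "(\<Sum>x\<in>X. f x - 1) = (\<Sum>t\<in>{2..m}. card {x \<in> X. t \<le> f x})"
proof -
  have "(\<Sum>x\<in>X. f x - 1) = (\<Sum>x\<in>X. \<Sum>t\<in>{2..m}. if t \<le> f x then 1 else 0)"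
  proof (intro sum.cong refl)
    fix x assume x: "x \<in> X"
    have "(\<Sum>t\<in>{2..m}. if t \<le> f x then 1 else (0::nat)) = card {t \<in> {2..m}. t \<le> f x}"
      by (simp add: sum.If_cases Int_def)
    also have "{t \<in> {2..m}. t \<le> f x} = {2..f x}" using f[OF x] by auto
    finally show "f x - 1 = (\<Sum>t\<in>{2..m}. if t \<le> f x then 1 else 0)" by simp
  qed
  also have "\<dots> = (\<Sum>t\<in>{2..m}. \<Sum>x\<in>X. if t \<le> f x then 1 else 0)" by (rule sum.swap)
  also have "\<dots> = (\<Sum>t\<in>{2..m}. card {x \<in> X. t \<le> f x})"
    by (intro sum.cong refl) (simp add: sum.If_cases Int_def fin)
  finally show ?thesis .
qed


lemma keys_finite: "finite (tab_keys c s)"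
proof -
  have "tab_keys c s \<subseteq> {xs. set xs \<subseteq> {0..<s} \<and> length xs = c}"
    unfolding tab_keys_def by (auto simp: in_set_conv_nth)
  then show ?thesis using finite_lists_length_eq[of "{0..<s}" c] finite_subset by auto
qed

lemma comb:
  fixes X :: "nat list set" and q :: "nat list" and \<beta> :: real
  assumes X: "X \<subseteq> tab_keys c s" and c: "c \<ge> 1" and b: "\<beta> \<ge> 1"
    and bq: "\<And>j. j < c \<Longrightarrow> q ! j < s \<Longrightarrow> \<beta> \<ge> 2"
    and jf: "\<And>x. x \<in> X \<Longrightarrow> jf x < c \<and> x ! jf x \<noteq> q ! jf x \<and>
          (\<forall>j<c. x ! j \<noteq> q ! j \<longrightarrow> card {k\<in>X. k ! jf x = x ! jf x} \<le> card {k\<in>X. k ! j = x ! j})"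
  shows "real (\<Sum>x\<in>X. dcount jf X x) \<le> 2 * \<beta> * real (card X) powr (2 - 1 / c)"
proof -
  have finX: "finite X" using X keys_finite finite_subset by blast
  define m where "m = card X"
  define f where "f = (\<lambda>x. card {k\<in>X. k ! jf x = x ! jf x})"
  have f1: "1 \<le> f x \<and> f x \<le> m" if x: "x \<in> X" for x
  proof -
    have "x \<in> {k\<in>X. k ! jf x = x ! jf x}" using x by simp
    then have "card {k\<in>X. k ! jf x = x ! jf x} \<ge> 1"
      using finX by (metis (no_types, lifting) One_nat_def Suc_leI card_gt_0_iff empty_iff finite_subset mem_Collect_eq subsetI)
    moreover have "card {k\<in>X. k ! jf x = x ! jf x} \<le> m" unfolding m_def by (intro card_mono finX) auto
    ultimately show ?thesis unfolding f_def by simp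
  qed
  have dc: "dcount jf X x = f x - 1" if x: "x \<in> X" for x
  proof -
    have "{k \<in> X. k \<noteq> x \<and> k ! jf x = x ! jf x} = {k\<in>X. k ! jf x = x ! jf x} - {x}" by auto
    then show ?thesis unfolding dcount_def f_def using x finX by (simp add: card_Diff_singleton)
  qed
  show ?thesis
  proof (cases "c = 1 \<or> m = 0")
    case True
    have "(\<Sum>x\<in>X. dcount jf X x) = 0"
    proof (cases "c = 1")
      case c1: True
      have "dcount jf X x = 0" if x: "x \<in> X" for x
      proof -
        have j0: "jf x = 0" using jf[OF x] c1 by simp
        have "{k \<in> X. k \<noteq> x \<and> k ! jf x = x ! jf x} = {}"
        proof (rule ccontr)
          assume "{k \<in> X. k \<noteq> x \<and> k ! jf x = x ! jf x} \<noteq> {}"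
          then obtain k where k: "k \<in> X" "k \<noteq> x" "k ! 0 = x ! 0" using j0 by auto
          have "length k = 1" "length x = 1" using k x X c1 by (auto simp: tab_keys_def)
          then have "k = x" using k(3) by (intro nth_equalityI) auto
          then show False using k by simp
        qed
        then show ?thesis unfolding dcount_def by (simp only: card.empty)
      qed
      then show ?thesis by simp
    next
      case False
      then have "X = {}" using True finX unfolding m_def by simp
      then show ?thesis by simp
    qed
    then show ?thesis using b by simp
  next
    case False
    then have c2: "c \<ge> 2" and m1: "m \<ge> 1" using c by auto
    have "(\<Sum>x\<in>X. dcount jf X x) = (\<Sum>x\<in>X. f x - 1)" by (intro sum.cong refl) (simp add: dc)
    also have "\<dots> = (\<Sum>t\<in>{2..m}. card {x \<in> X. t \<le> f x})" by (rule sum_layers[OF finX f1])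
    finally have e: "real (\<Sum>x\<in>X. dcount jf X x) = (\<Sum>t\<in>{2..m}. real (card {x \<in> X. t \<le> f x}))" by simp
    have "(\<Sum>t\<in>{2..m}. real (card {x \<in> X. t \<le> f x})) \<le> 2 * \<beta> * real m powr (2 - 1 / c)"
    proof (rule analytic[OF c2 m1 b])
      fix t assume t: "t \<in> {2..m}"
      show "real (card {x \<in> X. t \<le> f x}) \<le> real m"
        unfolding m_def by (intro of_nat_mono card_mono finX) auto
    next
      fix t assume t: "t \<in> {2..m}"
      define H where "H = (\<lambda>j. {a \<in> (\<lambda>k. k ! j) ` X. t \<le> card {k \<in> X. k ! j = a}})"
      define A where "A = (\<lambda>j. H j \<union> {a. a = q ! j \<and> a < s})"
      have finA: "finite (A j)" for j unfolding A_def H_def using finX by auto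
      have sub: "{x \<in> X. t \<le> f x} \<subseteq> {x. length x = c \<and> (\<forall>j<c. x ! j \<in> A j)}"
      proof clarify
        fix x assume x: "x \<in> X" and tf: "t \<le> f x"
        have len: "length x = c" using x X by (auto simp: tab_keys_def)
        have "x ! j \<in> A j" if j: "j < c" for j
        proof (cases "x ! j = q ! j")
          case True
          have "x ! j < s" using x X j by (auto simp: tab_keys_def)
          then show ?thesis using True unfolding A_def by auto
        next
          case False
          have "t \<le> card {k\<in>X. k ! j = x ! j}" using tf jf[OF x] j False unfolding f_def by (meson order_trans)
          then show ?thesis unfolding A_def H_def using x by auto
        qed
        then show "length x = c \<and> (\<forall>j<c. x ! j \<in> A j)" using len by simp
      qed
      have cA: "real (card (A j)) \<le> \<beta> * m / t" if j: "j < c" for j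
      proof -
        have t1: "t \<ge> 1" "real t \<le> m" using t by auto
        have "card (A j) \<le> card (H j) + card {a. a = q ! j \<and> a < s}"
          unfolding A_def by (rule card_Un_le)
        then have "real (card (A j)) \<le> real (card (H j)) + real (card {a. a = q ! j \<and> a < s})"
          by (metis of_nat_add of_nat_le_iff)
        moreover have "real (card (H j)) \<le> m / t" unfolding H_def m_def by (rule heavy_card[OF finX t1(1)])
        moreover have "card {a. a = q ! j \<and> a < s} = (if q ! j < s then 1 else 0)"
        proof -
          have "{a. a = q ! j \<and> a < s} = (if q ! j < s then {q ! j} else {})" by auto
          then show ?thesis by simp
        qed
        then have "real (card {a. a = q ! j \<and> a < s}) = (if q ! j < s then 1 else 0)" by simp
        ultimately have cA: "real (card (A j)) \<le> m / t + (if q ! j < s then 1 else 0)" by linarith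
        have mt: "1 \<le> m / t" using t1 by simp
        show ?thesis
        proof (cases "q ! j < s")
          case True
          have "m / t + 1 \<le> 2 * (m / t)" using mt by simp
          also have "\<dots> \<le> \<beta> * (m / t)" using bq[OF j True] mt by (intro mult_right_mono) auto
          finally show ?thesis using cA True by simp
        next
          case False
          have "1 * (m / t) \<le> \<beta> * (m / t)" using b mt by (intro mult_right_mono) auto
          then show ?thesis using cA False by simp
        qed
      qed
      have "card {x \<in> X. t \<le> f x} \<le> (\<Prod>j<c. card (A j))" by (rule card_lists_le[OF sub finA])
      then have "real (card {x \<in> X. t \<le> f x}) \<le> (\<Prod>j<c. real (card (A j)))"
        by (metis of_nat_le_iff of_nat_prod)
      also have "\<dots> \<le> (\<Prod>j<c. \<beta> * m / t)" by (intro prod_mono) (auto intro: cA)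
      also have "\<dots> = (\<beta> * m / t)^c" by simp
      finally show "real (card {x \<in> X. t \<le> f x}) \<le> (\<beta> * m / t)^c" .
    qed
    then show ?thesis using e unfolding m_def by simp
  qed
qed


lemma core:
  fixes W :: "(nat \<Rightarrow> nat \<Rightarrow> nat) \<Rightarrow> bool" and \<beta> :: real
  assumes X: "X \<subseteq> tab_keys c s" and c: "c \<ge> 1" and b: "\<beta> \<ge> 1"
    and bq: "\<And>j. j < c \<Longrightarrow> q ! j < s \<Longrightarrow> \<beta> \<ge> 2"
    and y: "y < 2^r"
    and ex: "\<And>x. x \<in> X \<Longrightarrow> \<exists>j<c. x ! j \<noteq> q ! j"
    and Wi: "\<And>x j. x \<in> X \<Longrightarrow> j < c \<Longrightarrow> x ! j \<noteq> q ! j \<Longrightarrow> invar j (x ! j) W"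
    and PW: "\<And>k x. k \<in> X \<Longrightarrow> x \<in> X \<Longrightarrow> k \<noteq> x \<Longrightarrow>
               cnt c s r (\<lambda>T. W T \<and> tab_hash c T k = tab_hash c T x) = cnt c s r W / 2^r"
    and PW1: "\<And>k. k \<in> X \<Longrightarrow> cnt c s r (\<lambda>T. W T \<and> tab_hash c T k = y) = cnt c s r W / 2^r"
  shows "\<bar>cnt c s r (\<lambda>T. W T \<and> y \<notin> (\<lambda>k. tab_hash c T k) ` X) - (1 - 1/2^r)^card X * cnt c s r W\<bar>
         \<le> cnt c s r W / (2^r)^2 * (\<beta> * real (card X) powr (2 - 1 / c))"
proof -
  have finX: "finite X" using X keys_finite finite_subset by blast
  define d where "d = (\<lambda>x j. card {k\<in>X. k ! j = x ! j})"
  define jf where "jf = (\<lambda>x. SOME j. (j < c \<and> x ! j \<noteq> q ! j) \<and> (\<forall>j'. (j' < c \<and> x ! j' \<noteq> q ! j') \<longrightarrow> d x j \<le> d x j'))"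
  have jfp: "jf x < c \<and> x ! jf x \<noteq> q ! jf x \<and>
          (\<forall>j<c. x ! j \<noteq> q ! j \<longrightarrow> card {k\<in>X. k ! jf x = x ! jf x} \<le> card {k\<in>X. k ! j = x ! j})"
    if x: "x \<in> X" for x
  proof -
    obtain j0 where "j0 < c \<and> x ! j0 \<noteq> q ! j0" using ex[OF x] by blast
    then have "\<exists>j. (j < c \<and> x ! j \<noteq> q ! j) \<and> (\<forall>j'. (j' < c \<and> x ! j' \<noteq> q ! j') \<longrightarrow> d x j \<le> d x j')"
      by (rule ex_has_least_nat)
    then have "(jf x < c \<and> x ! jf x \<noteq> q ! jf x) \<and> (\<forall>j'. (j' < c \<and> x ! j' \<noteq> q ! j') \<longrightarrow> d x (jf x) \<le> d x j')"
      unfolding jf_def by (rule someI_ex)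
    then show ?thesis unfolding d_def by blast
  qed
  have comb': "real (\<Sum>x\<in>X. dcount jf X x) \<le> 2 * \<beta> * real (card X) powr (2 - 1 / c)"
    by (rule comb[OF X c b bq jfp])
  obtain xs where xs: "set xs = X" "distinct xs" using finite_distinct_list[OF finX] by blast
  have len: "length xs = card X" "length (rev xs) = card X" using xs by (auto simp: distinct_card)
  have hj: "jf x < c \<and> invar (jf x) (x ! jf x) W" if "x \<in> X" for x
    using jfp[OF that] Wi[OF that] by blast
  define L where "L = \<bar>cnt c s r (\<lambda>T. W T \<and> y \<notin> (\<lambda>k. tab_hash c T k) ` X) - (1 - 1/2^r)^card X * cnt c s r W\<bar>"
  define w where "w = cnt c s r W / (2^r)^2"
  have w0: "w \<ge> 0" unfolding w_def by (simp add: cnt_nonneg)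
  have L1: "L \<le> w * errs jf xs"
    unfolding L_def w_def
    using main_ind[of xs c s y r jf W] xs X y hj PW PW1 len by auto
  have L2: "L \<le> w * errs jf (rev xs)"
    unfolding L_def w_def
    using main_ind[of "rev xs" c s y r jf W] xs X y hj PW PW1 len by auto
  have "2 * L \<le> w * (errs jf xs + errs jf (rev xs))" using L1 L2 by (simp add: algebra_simps)
  also have "errs jf xs + errs jf (rev xs) = (\<Sum>x\<in>X. dcount jf X x)"
    using errs_rev_sum[OF xs(2)] xs(1) by simp
  also have "w * real (\<Sum>x\<in>X. dcount jf X x) \<le> w * (2 * \<beta> * real (card X) powr (2 - 1 / c))"
    using comb' w0 by (intro mult_left_mono) auto
  finally have "L \<le> w * (\<beta> * real (card X) powr (2 - 1 / c))" by simp
  then show ?thesis unfolding L_def w_def .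
qed


lemma keys_differ:
  assumes "k \<in> tab_keys c s" "x \<in> tab_keys c s" "k \<noteq> x"
  shows "\<exists>j<c. k ! j \<noteq> x ! j"
proof (rule ccontr)
  assume "\<not> (\<exists>j<c. k ! j \<noteq> x ! j)"
  moreover have "length k = c" "length x = c" using assms by (auto simp: tab_keys_def)
  ultimately have "k = x" by (intro nth_equalityI) auto
  then show False using assms by simp
qed

lemma invar_comp: "invar j a g \<Longrightarrow> invar j a (\<lambda>T. P (g T))"
  by (simp add: invar_def)

lemma invar_True: "invar j a (\<lambda>T. True)"
  by (simp add: invar_def)

lemma pw_gen:
  assumes "k \<in> tab_keys c s" "x \<in> tab_keys c s" "j < c" "k ! j \<noteq> x ! j" "invar j (x ! j) W"
  shows "cnt c s r (\<lambda>T. W T \<and> tab_hash c T k = tab_hash c T x) = cnt c s r W / 2^r"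
proof -
  have "cnt c s r (\<lambda>T. W T \<and> tab_hash c T k = tab_hash c T x) = cnt c s r (\<lambda>T. tab_hash c T x = tab_hash c T k \<and> W T)"
    by (intro cnt_cong) auto
  also have "\<dots> = cnt c s r W / 2^r"
    by (rule IL'[OF assms(3) assms(2) refl assms(5)]) (use assms hash_less invar_hash_other in auto)
  finally show ?thesis .
qed

lemma pw_gen':
  assumes "k \<in> tab_keys c s" "x \<in> tab_keys c s" "j < c" "k ! j \<noteq> x ! j" "invar j (k ! j) W"
  shows "cnt c s r (\<lambda>T. W T \<and> tab_hash c T k = tab_hash c T x) = cnt c s r W / 2^r"
proof -
  have "cnt c s r (\<lambda>T. W T \<and> tab_hash c T k = tab_hash c T x) = cnt c s r (\<lambda>T. tab_hash c T k = tab_hash c T x \<and> W T)"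
    by (intro cnt_cong) auto
  also have "\<dots> = cnt c s r W / 2^r"
    by (rule IL'[OF assms(3) assms(1) refl assms(5)]) (use assms hash_less invar_hash_other in auto)
  finally show ?thesis .
qed

lemma pw1_gen:
  assumes "k \<in> tab_keys c s" "j < c" "invar j (k ! j) W" "y < 2^r"
  shows "cnt c s r (\<lambda>T. W T \<and> tab_hash c T k = y) = cnt c s r W / 2^r"
proof -
  have "cnt c s r (\<lambda>T. W T \<and> tab_hash c T k = y) = cnt c s r (\<lambda>T. tab_hash c T k = y \<and> W T)"
    by (intro cnt_cong) auto
  also have "\<dots> = cnt c s r W / 2^r"
    by (rule IL'[OF assms(2) assms(1) refl assms(3) invar_const]) (use assms in auto)
  finally show ?thesis .
qed

lemma tabs_ne: "tab_tables c s r \<noteq> {}"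
  unfolding tab_tables_def by (simp add: PiE_eq_empty_iff)

lemma cnt_True_pos: "cnt c s r (\<lambda>T. True) > 0"
  unfolding cnt_def using tabs_ne tabs_finite by (simp add: card_gt_0_iff)

lemma cnt_True: "cnt c s r (\<lambda>T. True) = real (card (tab_tables c s r))"
  unfolding cnt_def by simp

lemma prob_tab: "measure_pmf.prob (tab_pmf c s r) {T. P T} = cnt c s r P / cnt c s r (\<lambda>T. True)"
  unfolding tab_pmf_def cnt_True
  by (subst measure_pmf_of_set[OF tabs_ne tabs_finite]) (simp add: cnt_def Int_def conj_commute)

lemma cond_pmf_of_set:
  assumes fin: "finite S" and ne: "S \<inter> A \<noteq> {}"
  shows "cond_pmf (pmf_of_set S) A = pmf_of_set (S \<inter> A)"
proof -
  have S: "S \<noteq> {}" using ne by auto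
  have ne': "set_pmf (pmf_of_set S) \<inter> A \<noteq> {}" using fin S ne by simp
  have cpos: "card (S \<inter> A) > 0" using fin ne by (simp add: card_gt_0_iff)
  show ?thesis
  proof (rule pmf_eqI)
    fix x
    have "pmf (cond_pmf (pmf_of_set S) A) x = (if x \<in> A then pmf (pmf_of_set S) x / measure_pmf.prob (pmf_of_set S) A else 0)"
      by (rule pmf_cond[OF ne'])
    also have "\<dots> = pmf (pmf_of_set (S \<inter> A)) x"
      using fin S ne cpos by (auto simp: measure_pmf_of_set indicator_def field_simps)
    finally show "pmf (cond_pmf (pmf_of_set S) A) x = pmf (pmf_of_set (S \<inter> A)) x" .
  qed
qed


lemma finish:
  fixes C N M n :: real and m :: nat
  assumes C: "C > 0" and n: "n \<ge> 1" and b: "\<bar>N - (1 - 1/n)^m * C\<bar> \<le> C / n^2 * M"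
  shows "\<bar>(C - N) / C - (1 - (1 - 1/n)^m)\<bar> \<le> M / n^2"
proof -
  have "(C - N) / C - (1 - (1 - 1/n)^m) = ((1 - 1/n)^m * C - N) / C" using C by (simp add: field_simps)
  then have "\<bar>(C - N) / C - (1 - (1 - 1/n)^m)\<bar> = \<bar>N - (1 - 1/n)^m * C\<bar> / C" using C by (simp add: abs_minus_commute)
  also have "\<dots> \<le> (C / n^2 * M) / C" using b C by (intro divide_right_mono) auto
  also have "\<dots> = M / n^2" using C by simp
  finally show ?thesis .
qed

lemma part1:
  assumes c: "c \<ge> 1" and X: "X \<subseteq> tab_keys c s" and y: "y < 2^r"
  shows "\<bar>measure_pmf.prob (tab_pmf c s r) {T. y \<in> tab_hash c T ` X} - p0 (2 ^ r) (card X)\<bar>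
        \<le> real (card X) powr (2 - 1 / real c) / (2 ^ r) ^ 2"
proof -
  define q where "q = replicate c s"
  define C where "C = cnt c s r (\<lambda>T. True)"
  define N where "N = cnt c s r (\<lambda>T. True \<and> y \<notin> (\<lambda>k. tab_hash c T k) ` X)"
  have core1: "\<bar>N - (1 - 1/2^r)^card X * C\<bar> \<le> C / (2^r)^2 * (1 * real (card X) powr (2 - 1 / c))"
    unfolding N_def C_def
  proof (rule core[where q = q and W = "\<lambda>T. True"])
    show "X \<subseteq> tab_keys c s" "c \<ge> 1" "(1::real) \<ge> 1" "y < 2^r" by (fact X, fact c, simp, fact y)
    show "\<And>j. j < c \<Longrightarrow> q ! j < s \<Longrightarrow> (1::real) \<ge> 2" by (simp add: q_def)
    show "\<exists>j<c. x ! j \<noteq> q ! j" if x: "x \<in> X" for x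
    proof -
      have "x ! 0 < s" using keys_entry[of x c s 0] x X c by auto
      then show ?thesis using c by (intro exI[of _ 0]) (auto simp: q_def)
    qed
    show "\<And>x j. x \<in> X \<Longrightarrow> j < c \<Longrightarrow> x ! j \<noteq> q ! j \<Longrightarrow> invar j (x ! j) (\<lambda>T. True)" by (rule invar_True)
    show "cnt c s r (\<lambda>T. True \<and> tab_hash c T k = tab_hash c T x) = cnt c s r (\<lambda>T. True) / 2^r"
      if kx: "k \<in> X" "x \<in> X" "k \<noteq> x" for k x
    proof -
      obtain j where "j < c" "k ! j \<noteq> x ! j" using keys_differ[of k c s x] kx X by blast
      then show ?thesis using pw_gen[of k c s x j "\<lambda>T. True" r] kx X invar_True by blast
    qed
    show "cnt c s r (\<lambda>T. True \<and> tab_hash c T k = y) = cnt c s r (\<lambda>T. True) / 2^r" if "k \<in> X" for k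
      using pw1_gen[of k c s 0 "\<lambda>T. True" y r] that X c y invar_True by auto
  qed
  have P: "measure_pmf.prob (tab_pmf c s r) {T. y \<in> tab_hash c T ` X} = (C - N) / C"
  proof -
    have "C = cnt c s r (\<lambda>T. True \<and> y \<in> (\<lambda>k. tab_hash c T k) ` X) + N"
      unfolding C_def N_def by (rule cnt_split)
    moreover have "cnt c s r (\<lambda>T. True \<and> y \<in> (\<lambda>k. tab_hash c T k) ` X) = cnt c s r (\<lambda>T. y \<in> tab_hash c T ` X)"
      by (intro cnt_cong) auto
    ultimately show ?thesis unfolding prob_tab C_def by simp
  qed
  have p0e: "p0 (2 ^ r) (card X) = 1 - (1 - 1 / 2^r)^card X" unfolding p0_def by simp
  show ?thesis unfolding P p0e
    by (rule finish[OF _ _ core1[unfolded mult_1]]) (auto simp: C_def cnt_True_pos)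
qed


lemma sum_if_card: "finite S \<Longrightarrow> (\<Sum>T\<in>S. if P T then 1 else (0::real)) = real (card {T\<in>S. P T})"
  by (simp add: sum.If_cases Collect_conj_eq Int_commute)

lemma part2:
  assumes c: "c \<ge> 1" and X: "X \<subseteq> tab_keys c s"
  shows "\<bar>measure_pmf.expectation (tab_pmf c s r) (\<lambda>T. real (card (tab_hash c T ` X)))
          - real (2 ^ r) * p0 (2 ^ r) (card X)\<bar>
        \<le> real (card X) powr (2 - 1 / real c) / 2 ^ r"
proof -
  define S where "S = tab_tables c s r"
  define n :: nat where "n = 2^r"
  define pr where "pr = (\<lambda>y. measure_pmf.prob (tab_pmf c s r) {T. y \<in> tab_hash c T ` X})"
  define M where "M = real (card X) powr (2 - 1 / real c)"
  have finS: "finite S" and neS: "S \<noteq> {}" unfolding S_def by (rule tabs_finite, rule tabs_ne)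
  have cardim: "card (tab_hash c T ` X) = (\<Sum>y<n. if y \<in> tab_hash c T ` X then 1 else 0)" if T: "T \<in> S" for T
  proof -
    have sub: "tab_hash c T ` X \<subseteq> {..<n}" using T X hash_less unfolding S_def n_def by fastforce
    have "(\<Sum>y<n. if y \<in> tab_hash c T ` X then 1 else (0::nat)) = card ({..<n} \<inter> tab_hash c T ` X)"
      by (simp add: sum.If_cases)
    also have "{..<n} \<inter> tab_hash c T ` X = tab_hash c T ` X" using sub by blast
    finally show ?thesis by simp
  qed
  have E: "measure_pmf.expectation (tab_pmf c s r) (\<lambda>T. real (card (tab_hash c T ` X))) = (\<Sum>y<n. pr y)"
  proof -
    have "measure_pmf.expectation (tab_pmf c s r) (\<lambda>T. real (card (tab_hash c T ` X)))
        = (\<Sum>T\<in>S. real (card (tab_hash c T ` X))) / card S"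
      unfolding tab_pmf_def S_def by (rule integral_pmf_of_set[OF tabs_ne tabs_finite])
    also have "(\<Sum>T\<in>S. real (card (tab_hash c T ` X))) = (\<Sum>T\<in>S. \<Sum>y<n. if y \<in> tab_hash c T ` X then 1 else (0::real))"
      by (intro sum.cong refl) (auto simp: cardim of_nat_sum intro!: sum.cong)
    also have "\<dots> = (\<Sum>y<n. \<Sum>T\<in>S. if y \<in> tab_hash c T ` X then 1 else (0::real))" by (rule sum.swap)
    also have "\<dots> = (\<Sum>y<n. cnt c s r (\<lambda>T. y \<in> tab_hash c T ` X))"
      by (intro sum.cong refl) (simp add: sum_if_card[OF tabs_finite] cnt_def S_def)
    finally show ?thesis unfolding pr_def prob_tab cnt_True S_def by (simp add: sum_divide_distrib)
  qed
  have "\<bar>(\<Sum>y<n. pr y) - real n * p0 n (card X)\<bar> = \<bar>\<Sum>y<n. (pr y - p0 n (card X))\<bar>"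
    by (simp add: sum_subtractf)
  also have "\<dots> \<le> (\<Sum>y<n. \<bar>pr y - p0 n (card X)\<bar>)" by (rule sum_abs)
  also have "\<dots> \<le> (\<Sum>y<n. M / (2^r)^2)"
    by (intro sum_mono) (unfold pr_def M_def n_def, rule part1[OF c X], simp add: n_def)
  also have "\<dots> = M / 2^r" by (simp add: n_def power2_eq_square)
  finally show ?thesis unfolding E M_def n_def .
qed

lemma part3:
  assumes c: "c \<ge> 1" and X: "X \<subseteq> tab_keys c s" and q: "q \<in> tab_keys c s - X"
    and y: "y < 2 ^ r" and z: "z < 2 ^ r"
  shows "\<bar>measure_pmf.prob (cond_pmf (tab_pmf c s r) {T. tab_hash c T q = z})
              {T. y \<in> tab_hash c T ` X} - p0 (2 ^ r) (card X)\<bar>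
            \<le> 2 * real (card X) powr (2 - 1 / real c) / (2 ^ r) ^ 2"
proof -
  define W where "W = (\<lambda>T. tab_hash c T q = z)"
  define C where "C = cnt c s r W"
  define N where "N = cnt c s r (\<lambda>T. W T \<and> y \<notin> (\<lambda>k. tab_hash c T k) ` X)"
  have qk: "q \<in> tab_keys c s" and qX: "q \<notin> X" using q by auto
  have CW: "C = cnt c s r (\<lambda>T. True) / 2^r"
  proof -
    have "C = cnt c s r (\<lambda>T. tab_hash c T q = z \<and> True)" unfolding C_def W_def by (intro cnt_cong) auto
    also have "\<dots> = cnt c s r (\<lambda>T. True) / 2^r"
      by (rule IL'[of 0 c q s "q ! 0" "\<lambda>T. True" "\<lambda>T. z"]) (use c qk z in \<open>auto intro: invar_True invar_const\<close>)
    finally show ?thesis .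
  qed
  have Cpos: "C > 0" unfolding CW using cnt_True_pos by simp
  have Winv: "invar j (x ! j) W" if "j < c" "x ! j \<noteq> q ! j" for j x
  proof -
    have "q ! j \<noteq> x ! j" using that by simp
    from invar_comp[OF invar_hash_other[OF this], where P = "\<lambda>v. v = z"]
    show ?thesis unfolding W_def .
  qed
  have core3: "\<bar>N - (1 - 1/2^r)^card X * C\<bar> \<le> C / (2^r)^2 * (2 * real (card X) powr (2 - 1 / c))"
    unfolding N_def C_def
  proof (rule core[where q = q and W = W])
    show "X \<subseteq> tab_keys c s" "c \<ge> 1" "(2::real) \<ge> 1" "y < 2^r" by (fact X, fact c, simp, fact y)
    show "\<And>j. j < c \<Longrightarrow> q ! j < s \<Longrightarrow> (2::real) \<ge> 2" by simp
    show "\<exists>j<c. x ! j \<noteq> q ! j" if x: "x \<in> X" for x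
      using keys_differ[of x c s q] x X qk qX by auto
    show "\<And>x j. x \<in> X \<Longrightarrow> j < c \<Longrightarrow> x ! j \<noteq> q ! j \<Longrightarrow> invar j (x ! j) W" using Winv by blast
    show "cnt c s r (\<lambda>T. W T \<and> tab_hash c T k = tab_hash c T x) = cnt c s r W / 2^r"
      if kx: "k \<in> X" "x \<in> X" "k \<noteq> x" for k x
    proof -
      obtain j where j: "j < c" "k ! j \<noteq> x ! j" using keys_differ[of k c s x] kx X by blast
      show ?thesis
      proof (cases "x ! j = q ! j")
        case False
        then show ?thesis using pw_gen[of k c s x j W r] kx X j Winv by auto
      next
        case True
        then have "k ! j \<noteq> q ! j" using j by simp
        then show ?thesis using pw_gen'[of k c s x j W r] kx X j Winv by auto
      qed
    qed
    show "cnt c s r (\<lambda>T. W T \<and> tab_hash c T k = y) = cnt c s r W / 2^r" if k: "k \<in> X" for k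
    proof -
      obtain j where j: "j < c" "k ! j \<noteq> q ! j" using keys_differ[of k c s q] k X qk qX by blast
      then show ?thesis using pw1_gen[of k c s j W y r] k X y Winv by auto
    qed
  qed
  have ne: "tab_tables c s r \<inter> {T. tab_hash c T q = z} \<noteq> {}"
  proof
    assume "tab_tables c s r \<inter> {T. tab_hash c T q = z} = {}"
    then have e: "{T \<in> tab_tables c s r. tab_hash c T q = z} = {}" by blast
    have "C = 0" unfolding C_def cnt_def W_def by (simp only: e card.empty of_nat_0)
    then show False using Cpos by simp
  qed
  have P: "measure_pmf.prob (cond_pmf (tab_pmf c s r) {T. tab_hash c T q = z}) {T. y \<in> tab_hash c T ` X} = (C - N) / C"
  proof -
    have "measure_pmf.prob (cond_pmf (tab_pmf c s r) {T. tab_hash c T q = z}) {T. y \<in> tab_hash c T ` X}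
        = card ((tab_tables c s r \<inter> {T. tab_hash c T q = z}) \<inter> {T. y \<in> tab_hash c T ` X}) / card (tab_tables c s r \<inter> {T. tab_hash c T q = z})"
      unfolding tab_pmf_def cond_pmf_of_set[OF tabs_finite ne]
      by (rule measure_pmf_of_set) (use ne tabs_finite in auto)
    also have "card (tab_tables c s r \<inter> {T. tab_hash c T q = z}) = C"
      unfolding C_def cnt_def W_def by (simp add: Int_def)
    also have "real (card ((tab_tables c s r \<inter> {T. tab_hash c T q = z}) \<inter> {T. y \<in> tab_hash c T ` X}))
        = cnt c s r (\<lambda>T. W T \<and> y \<in> (\<lambda>k. tab_hash c T k) ` X)"
      unfolding cnt_def W_def by (simp add: Int_def conj_assoc)
    also have "cnt c s r (\<lambda>T. W T \<and> y \<in> (\<lambda>k. tab_hash c T k) ` X) = C - N"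
      using cnt_split[of c s r W "\<lambda>T. y \<in> (\<lambda>k. tab_hash c T k) ` X"] unfolding C_def N_def by simp
    finally show ?thesis .
  qed
  have p0e: "p0 (2 ^ r) (card X) = 1 - (1 - 1 / 2^r)^card X" unfolding p0_def by simp
  have "\<bar>(C - N) / C - (1 - (1 - 1 / 2^r)^card X)\<bar> \<le> 2 * real (card X) powr (2 - 1 / c) / (2 ^ r) ^ 2"
    by (rule finish[OF Cpos _ core3]) simp
  then show ?thesis unfolding P p0e .
qed

theorem theorem1:
  fixes c s r m :: nat and X :: "nat list set" and y :: nat
  assumes "c \<ge> 1"
    and "X \<subseteq> tab_keys c s"
    and "card X = m"
    and "y < 2 ^ r"
  shows
    "\<bar>measure_pmf.prob (tab_pmf c s r) {T. y \<in> tab_hash c T ` X} - p0 (2 ^ r) m\<bar>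
        \<le> real m powr (2 - 1 / real c) / (2 ^ r) ^ 2
     \<and> \<bar>measure_pmf.expectation (tab_pmf c s r) (\<lambda>T. real (card (tab_hash c T ` X)))
          - real (2 ^ r) * p0 (2 ^ r) m\<bar>
        \<le> real m powr (2 - 1 / real c) / 2 ^ r
     \<and> (\<forall>q f z. q \<in> tab_keys c s - X \<longrightarrow> (\<forall>z'<2 ^ r. f z' < (2::nat) ^ r) \<longrightarrow> z < 2 ^ r \<longrightarrow>
          \<bar>measure_pmf.prob (cond_pmf (tab_pmf c s r) {T. tab_hash c T q = z})
              {T. f z \<in> tab_hash c T ` X} - p0 (2 ^ r) m\<bar>
            \<le> 2 * real m powr (2 - 1 / real c) / (2 ^ r) ^ 2)"
proof (intro conjI allI impI)
  show "\<bar>measure_pmf.prob (tab_pmf c s r) {T. y \<in> tab_hash c T ` X} - p0 (2 ^ r) m\<bar>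
        \<le> real m powr (2 - 1 / real c) / (2 ^ r) ^ 2"
    using part1[OF assms(1,2,4)] by (simp only: assms(3))
  show "\<bar>measure_pmf.expectation (tab_pmf c s r) (\<lambda>T. real (card (tab_hash c T ` X)))
          - real (2 ^ r) * p0 (2 ^ r) m\<bar> \<le> real m powr (2 - 1 / real c) / 2 ^ r"
    using part2[OF assms(1,2)] by (simp only: assms(3))
  fix q :: "nat list" and f :: "nat \<Rightarrow> nat" and z :: nat
  assume q: "q \<in> tab_keys c s - X" and f: "\<forall>z'<2 ^ r. f z' < (2::nat) ^ r" and z: "z < 2 ^ r"
  have fz: "f z < 2 ^ r" using f z by blast
  show "\<bar>measure_pmf.prob (cond_pmf (tab_pmf c s r) {T. tab_hash c T q = z})
              {T. f z \<in> tab_hash c T ` X} - p0 (2 ^ r) m\<bar>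
            \<le> 2 * real m powr (2 - 1 / real c) / (2 ^ r) ^ 2"
    using part3[OF assms(1,2) q fz z] by (simp only: assms(3))
qed

end
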